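(* Let $P$ be a convex polygon with no two edges parallel, and let $e_i\prec e_j$. Then $\mathrm{disprod}_{\ell_i,\ell_j}$ is strictly unimodal on $[v_{j+1}\circlearrowright v_i]$: $\mathrm{disprod}_{\ell_i,\ell_j}(X)$ strictly increases as $X$ travels clockwise along $\partial P$ from $v_{j+1}$ to $Z_i^j$, and strictly decreases as $X$ travels clockwise along $\partial P$ from $Z_i^j$ to $v_i$.
   Context: $P$ is a compact convex polygon with boundary $\partial P$, edges $e_1,\ldots,e_n$ in clockwise order and vertices $v_1,\ldots,v_n$, $e_i$ being the open segment from $v_i$ to $v_{i+1}$ (indices mod $n$). $\ell_i$ is the line containing $e_i$, $\mathsf{I}_{i,j}=\ell_i\cap\ell_j$. $d_l(X)$ is the distance from $X$ to the line $l$, and $\mathrm{disprod}_{l,l'}(X)=d_l(X)d_{l'}(X)$. For distinct edges, $e_i\prec e_j$ means $\mathsf{I}_{i,j}=v_i+t(v_{i+1}-v_i)$ for some $t\ge1$ (i.e. $\mathsf{I}_{i,j}$ lies between $e_i$ and $e_j$ clockwise; equivalently the clockwise turning angle from direction $v_{i+1}-v_i$ to $v_{j+1}-v_j$ is in $(0,\pi)$). For $e_i\prec e_j$, $Z_i^j$ denotes the unique point of $P$ at which $\mathrm{disprod}_{\ell_i,\ell_j}$ attains its maximum over $P$ (it lies on $\partial P$). $[X\circlearrowright X']$ is the closed portion of $\partial P$ from $X$ clockwise to $X'$. *)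

theory Defs
  imports "HOL-Analysis.Analysis"
begin

text \<open>Polygons are given by vertices v 0, ..., v (n-1) in real^2; indices taken mod n.
  Standard orientation: clockwise means the interior lies to the right of each directed edge.\<close>

definition cross2 :: "real^2 \<Rightarrow> real^2 \<Rightarrow> real" where
  "cross2 x y = x$1 * y$2 - x$2 * y$1"

definition edge_dir :: "nat \<Rightarrow> (nat \<Rightarrow> real^2) \<Rightarrow> nat \<Rightarrow> real^2" where
  "edge_dir n v i = v ((i + 1) mod n) - v (i mod n)"

text \<open>Compact convex polygon with vertices in (strict) convex position, listed clockwise:
  every other vertex lies strictly to the right of each directed edge line.\<close>
definition cw_convex_polygon :: "nat \<Rightarrow> (nat \<Rightarrow> real^2) \<Rightarrow> bool" where
  "cw_convex_polygon n v \<longleftrightarrow> n \<ge> 3 \<and>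
     (\<forall>i<n. \<forall>k<n. k \<noteq> i \<and> k \<noteq> (i + 1) mod n \<longrightarrow>
        cross2 (edge_dir n v i) (v k - v i) < 0)"

definition polygon :: "nat \<Rightarrow> (nat \<Rightarrow> real^2) \<Rightarrow> (real^2) set" where
  "polygon n v = convex hull (v ` {..<n})"

definition edge_line :: "nat \<Rightarrow> (nat \<Rightarrow> real^2) \<Rightarrow> nat \<Rightarrow> (real^2) set" where
  "edge_line n v i = {v (i mod n) + t *\<^sub>R edge_dir n v i | t. True}"

definition no_parallel_edges :: "nat \<Rightarrow> (nat \<Rightarrow> real^2) \<Rightarrow> bool" where
  "no_parallel_edges n v \<longleftrightarrow>
     (\<forall>i<n. \<forall>j<n. i \<noteq> j \<longrightarrow> cross2 (edge_dir n v i) (edge_dir n v j) \<noteq> 0)"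

definition edge_prec :: "nat \<Rightarrow> (nat \<Rightarrow> real^2) \<Rightarrow> nat \<Rightarrow> nat \<Rightarrow> bool" where
  "edge_prec n v i j \<longleftrightarrow> i mod n \<noteq> j mod n \<and>
     (\<exists>t\<ge>1. v (i mod n) + t *\<^sub>R edge_dir n v i \<in> edge_line n v j)"

definition disprod :: "nat \<Rightarrow> (nat \<Rightarrow> real^2) \<Rightarrow> nat \<Rightarrow> nat \<Rightarrow> real^2 \<Rightarrow> real" where
  "disprod n v i j X = infdist X (edge_line n v i) * infdist X (edge_line n v j)"

text \<open>Clockwise parametrisation of the boundary: parameter \<open>k + s\<close> (k natural, 0 \<le> s < 1)
  is the point \<open>v_k + s (v_{k+1} - v_k)\<close>, indices mod n; increasing parameter = clockwise.\<close>
definition bdry_path :: "nat \<Rightarrow> (nat \<Rightarrow> real^2) \<Rightarrow> real \<Rightarrow> real^2" where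
  "bdry_path n v t = (let k = nat \<lfloor>t\<rfloor>; s = t - of_int \<lfloor>t\<rfloor>
                      in v (k mod n) + s *\<^sub>R edge_dir n v k)"

end

theory Submission
  imports Defs
begin



lemma norm2_sq: "(norm (x::real^2))^2 = x$1^2 + x$2^2"
  unfolding norm_vec_def L2_set_def by (simp add: sum_2)

lemma cross2_bound: "\<bar>cross2 w d\<bar> \<le> norm w * norm d"
proof -
  have "(cross2 w d)^2 \<le> (norm w * norm d)^2"
  proof -
    have "(norm w * norm d)^2 = (cross2 w d)^2 + (w$1*d$1 + w$2*d$2)^2"
      unfolding power_mult_distrib norm2_sq cross2_def by (simp add: power2_eq_square algebra_simps)
    then show ?thesis by simp
  qed
  then show ?thesis
    using abs_le_square_iff[of "cross2 w d" "norm w * norm d"] by simp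
qed

lemma proj_id:
  fixes w1 w2 d1 d2 :: real
  assumes "d1^2 + d2^2 > 0"
  shows "(w1 - (w1*d1 + w2*d2) / (d1^2 + d2^2) * d1)^2 + (w2 - (w1*d1 + w2*d2) / (d1^2 + d2^2) * d2)^2
     = (w1 * d2 - w2 * d1)^2 / (d1^2 + d2^2)"
proof -
  define D where "D = d1^2 + d2^2"
  define S where "S = w1*d1 + w2*d2"
  define c where "c = w1 * d2 - w2 * d1"
  have D: "D > 0" "D \<noteq> 0" using assms D_def by auto
  have e1: "w1 - S / D * d1 = (w1*D - S*d1)/D" using D by (simp add: field_simps)
  have e2: "w2 - S / D * d2 = (w2*D - S*d2)/D" using D by (simp add: field_simps)
  have f1: "w1*D - S*d1 = c*d2" unfolding D_def S_def c_def by (simp add: power2_eq_square algebra_simps)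
  have f2: "w2*D - S*d2 = -(c*d1)" unfolding D_def S_def c_def by (simp add: power2_eq_square algebra_simps)
  have "(w1 - S / D * d1)^2 + (w2 - S / D * d2)^2 = (c*d2)^2/D^2 + (c*d1)^2/D^2"
    unfolding e1 e2 f1 f2 by (simp add: power_divide)
  also have "\<dots> = c^2 * D / D^2" unfolding D_def by (simp add: add_divide_distrib[symmetric] power_mult_distrib algebra_simps)
  also have "\<dots> = c^2 / D" using D by (simp add: power2_eq_square)
  finally show ?thesis unfolding D_def S_def c_def .
qed

lemma infdist_line:
  fixes a d X :: "real^2"
  assumes "d \<noteq> 0"
  shows "infdist X {a + t *\<^sub>R d | t. True} = \<bar>cross2 (X - a) d\<bar> / norm d"
proof -
  let ?L = "{a + t *\<^sub>R d | t. True}"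
  have nd: "norm d > 0" using assms by simp
  have lb: "\<bar>cross2 (X - a) d\<bar> / norm d \<le> dist X y" if hy: "y \<in> ?L" for y
  proof -
    obtain t where y: "y = a + t *\<^sub>R d" using hy by auto
    have "cross2 (X - y) d = cross2 (X - a) d"
      unfolding y cross2_def by (simp add: algebra_simps)
    moreover have "\<bar>cross2 (X - y) d\<bar> \<le> norm (X - y) * norm d" by (rule cross2_bound)
    ultimately show ?thesis using nd by (simp add: dist_norm divide_le_eq)
  qed
  define t0 where "t0 = inner (X - a) d / (norm d)^2"
  have mem: "a + t0 *\<^sub>R d \<in> ?L" by blast
  have "(dist X (a + t0 *\<^sub>R d))^2 = (cross2 (X - a) d / norm d)^2"
  proof -
    have nd2: "(norm d)^2 = d$1^2 + d$2^2" by (rule norm2_sq)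
    have pos: "d$1^2 + d$2^2 > 0" using nd nd2 by (metis zero_less_power)
    have t0eq: "t0 = ((X$1 - a$1)*d$1 + (X$2 - a$2)*d$2) / (d$1^2 + d$2^2)"
      unfolding t0_def nd2 by (simp add: inner_vec_def sum_2 algebra_simps)
    have "(dist X (a + t0 *\<^sub>R d))^2 = (X$1 - a$1 - t0 * d$1)^2 + (X$2 - a$2 - t0 * d$2)^2"
      by (simp add: dist_norm norm2_sq algebra_simps)
    also have "\<dots> = ((X$1 - a$1) * d$2 - (X$2 - a$2) * d$1)^2 / (d$1^2 + d$2^2)"
      unfolding t0eq
      by (rule proj_id[OF pos])
    finally show ?thesis unfolding power_divide nd2 cross2_def by simp
  qed
  hence eq: "dist X (a + t0 *\<^sub>R d) = \<bar>cross2 (X - a) d\<bar> / norm d"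
  proof -
    have "(cross2 (X - a) d / norm d)^2 = (\<bar>cross2 (X - a) d\<bar> / norm d)^2" by (simp add: power_divide)
    with \<open>(dist X (a + t0 *\<^sub>R d))^2 = _\<close> show ?thesis
      by (subst power2_eq_iff_nonneg[symmetric]) auto
  qed
  have "infdist X ?L = (INF y\<in>?L. dist X y)" by (rule infdist_notempty) blast
  also have "\<dots> = \<bar>cross2 (X - a) d\<bar> / norm d"
  proof (rule antisym)
    show "(INF y\<in>?L. dist X y) \<le> \<bar>cross2 (X - a) d\<bar> / norm d"
      using eq mem by (metis (no_types, lifting) bdd_below.I2 cINF_lower zero_le_dist)
    show "\<bar>cross2 (X - a) d\<bar> / norm d \<le> (INF y\<in>?L. dist X y)"
      by (rule cINF_greatest) (use lb in auto)
  qed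
  finally show ?thesis .
qed




lemma cross2_anti: "cross2 a b = - cross2 b a" by (simp add: cross2_def)
lemma cross2_self[simp]: "cross2 a a = 0" by (simp add: cross2_def)
lemma cross2_add1[simp]: "cross2 (a + b) c = cross2 a c + cross2 b c" by (simp add: cross2_def algebra_simps)
lemma cross2_add2[simp]: "cross2 c (a + b) = cross2 c a + cross2 c b" by (simp add: cross2_def algebra_simps)
lemma cross2_diff1[simp]: "cross2 (a - b) c = cross2 a c - cross2 b c" by (simp add: cross2_def algebra_simps)
lemma cross2_diff2[simp]: "cross2 c (a - b) = cross2 c a - cross2 c b" by (simp add: cross2_def algebra_simps)
lemma cross2_scale1[simp]: "cross2 (t *\<^sub>R a) c = t * cross2 a c" by (simp add: cross2_def algebra_simps)
lemma cross2_scale2[simp]: "cross2 c (t *\<^sub>R a) = t * cross2 c a" by (simp add: cross2_def algebra_simps)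
lemma cross2_minus1[simp]: "cross2 (- a) c = - cross2 a c" by (simp add: cross2_def algebra_simps)
lemma cross2_minus2[simp]: "cross2 c (- a) = - cross2 c a" by (simp add: cross2_def algebra_simps)
lemma cross2_zero1[simp]: "cross2 0 c = 0" by (simp add: cross2_def)
lemma cross2_zero2[simp]: "cross2 c 0 = 0" by (simp add: cross2_def)

lemma cramer: "cross2 u1 u2 * cross2 w e = cross2 w u2 * cross2 u1 e + cross2 u1 w * cross2 u2 e"
  by (simp add: cross2_def algebra_simps)

lemma cross2_quad: "cross2 a b * cross2 c d - cross2 a d * cross2 c b = cross2 a c * cross2 b d"
  by (simp add: cross2_def algebra_simps)

lemma cross2_zero_vec:
  assumes "cross2 w a = 0" "cross2 w b = 0" "cross2 a b \<noteq> 0"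
  shows "w = (0::real^2)"
proof -
  have "cross2 a b * cross2 w e = 0" for e
    using cramer[of a b w e] assms by (simp add: cross2_anti[of a w] cross2_anti[of b w])
  hence z: "cross2 w e = 0" for e using assms(3) by simp
  have "w$1 = 0" using z[of "axis 2 1"] by (simp add: cross2_def axis_def)
  moreover have "w$2 = 0" using z[of "axis 1 1"] by (simp add: cross2_def axis_def)
  ultimately show ?thesis by (simp add: vec_eq_iff forall_2)
qed

lemma mod_off: "0 < s \<Longrightarrow> s < (n::nat) \<Longrightarrow> (m + s) mod n \<noteq> m mod n"
proof -
  assume s: "0 < s" "s < n"
  define r where "r = m mod n"
  have r: "r < n" unfolding r_def using s by simp
  have e: "(m + s) mod n = (r + s) mod n" unfolding r_def by (simp add: mod_add_left_eq)
  show ?thesis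
  proof (cases "r + s < n")
    case True
    then show ?thesis unfolding e using s by (simp add: r_def)
  next
    case False
    then have "(r + s) mod n = (r + s - n) mod n" by (simp add: le_mod_geq)
    also have "\<dots> = r + s - n" using r s by simp
    finally show ?thesis unfolding e using s False r_def by linarith
  qed
qed

locale poly =
  fixes n :: nat and v :: "nat \<Rightarrow> real^2"
  assumes cw: "cw_convex_polygon n v"
begin

definition V where "V m = v (m mod n)"
definition D where "D m = edge_dir n v m"
definition L where "L m X = cross2 (X - V m) (D m)"

lemma n3: "n \<ge> 3" using cw unfolding cw_convex_polygon_def by simp
lemma npos: "n > 0" using n3 by simp
lemma V_mod: "V (m mod n) = V m" by (simp add: V_def)
lemma V_add_n[simp]: "V (m + n) = V m" by (simp add: V_def)
lemma D_eq: "D m = V (Suc m) - V m" by (simp add: D_def V_def edge_dir_def)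
lemma D_mod: "D (m mod n) = D m" by (simp add: D_eq V_def mod_Suc_eq)
lemma D_add_n[simp]: "D (m + n) = D m" unfolding D_eq using V_add_n[of "Suc m"] by simp

lemma L_affine: "L m (X + t *\<^sub>R Y) = L m X + t * cross2 Y (D m)"
  by (simp add: L_def algebra_simps)

lemma Lpos_gen:
  assumes "r mod n \<noteq> m mod n" "r mod n \<noteq> Suc m mod n"
  shows "L m (V r) > 0"
proof -
  have "cross2 (edge_dir n v (m mod n)) (v (r mod n) - v (m mod n)) < 0"
    using cw assms npos unfolding cw_convex_polygon_def
    by (metis mod_Suc_eq mod_less_divisor Suc_eq_plus1)
  then have "cross2 (D m) (V r - V m) < 0"
    by (metis D_def D_mod V_def)
  then show ?thesis unfolding L_def using cross2_anti[of "V r - V m" "D m"] by linarith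
qed

lemma Lnonneg: "L m (V r) \<ge> 0"
proof (cases "r mod n = m mod n \<or> r mod n = Suc m mod n")
  case True
  then show ?thesis
  proof
    assume "r mod n = m mod n"
    then have "V r = V m" by (metis V_mod)
    then show ?thesis by (simp add: L_def)
  next
    assume "r mod n = Suc m mod n"
    then have "V r = V (Suc m)" by (metis V_mod)
    then show ?thesis by (simp add: L_def D_eq)
  qed
next
  case False
  then show ?thesis using Lpos_gen[of r m] by auto
qed

lemma Lpos_off: "2 \<le> s \<Longrightarrow> s < n \<Longrightarrow> L m (V (m + s)) > 0"
  apply (rule Lpos_gen)
   apply (rule mod_off; simp)
  using mod_off[of "s - 1" n "Suc m"] by simp

lemma cwD_off: "2 \<le> s \<Longrightarrow> s < n \<Longrightarrow> cross2 (D m) (V (m + s) - V m) < 0"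
  using Lpos_off[of s m] cross2_anti[of "D m" "V (m + s) - V m"] by (simp add: L_def)

lemma turn: "cross2 (D m) (D (Suc m)) < 0"
proof -
  have "V (m + 2) - V m = D m + D (Suc m)" by (simp add: D_eq)
  then show ?thesis using cwD_off[of 2 m] n3 by (simp add: cross2_anti[of "D m" "D (Suc m)"])
qed

lemma L_step: "L m (V (Suc r)) - L m (V r) = cross2 (D r) (D m)"
  by (simp add: L_def D_eq)

lemma mono_step:
  assumes s0: "1 \<le> s0" "s0 + 2 \<le> n" and le: "cross2 (D (m + s0)) (D m) \<le> 0"
  shows "cross2 (D (Suc (m + s0))) (D m) < 0"
proof (rule ccontr)
  assume "\<not> ?thesis"
  hence ge: "cross2 (D (Suc (m + s0))) (D m) \<ge> 0" by simp
  define r where "r = Suc (m + s0)"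
  have Lr: "L m (V r) > 0" unfolding r_def using Lpos_off[of "Suc s0" m] s0 by simp
  have Lm: "L m (V m) = 0" by (simp add: L_def)
  show False
  proof (cases "s0 + 2 = n")
    case True
    then have "Suc r = m + n" unfolding r_def by simp
    then have "V (Suc r) = V m" by simp
    then show False using L_step[of m r] ge Lr Lm unfolding r_def by simp
  next
    case False
    with s0 have s0': "s0 + 3 \<le> n" by simp
    define A where "A = D (m + s0)"
    define B where "B = D r"
    define w where "w = V m - V r"
    have h1: "cross2 A (V m - V (m + s0)) < 0"
    proof -
      have "V m = V (m + s0 + (n - s0))" using s0 by (simp add: add.assoc)
      then show ?thesis unfolding A_def using cwD_off[of "n - s0" "m + s0"] s0 by simp
    qed
    have h2: "cross2 B (V m - V r) < 0"
    proof -
      have "V m = V (r + (n - Suc s0))" unfolding r_def using s0 by (simp add: add.assoc)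
      then show ?thesis unfolding B_def using cwD_off[of "n - Suc s0" r] s0' by simp
    qed
    have h3: "cross2 A B < 0" unfolding A_def B_def r_def using turn by simp
    have Vr1: "V r - V (m + s0) = A" unfolding A_def r_def by (simp add: D_eq)
    have "cross2 A (V m - V (m + s0)) = cross2 A w + cross2 A A"
    proof -
      have "V m - V (m + s0) = w + A" unfolding w_def using Vr1 by (simp add: algebra_simps)
      then show ?thesis by simp
    qed
    hence hA: "cross2 A w < 0" using h1 by simp
    let ?u1 = "V (m + s0) - V r" and ?u2 = "V (Suc r) - V r"
    have u1: "?u1 = - A" using Vr1 by (metis minus_diff_eq)
    have u2: "?u2 = B" unfolding B_def by (simp add: D_eq)
    have "cross2 ?u1 ?u2 * cross2 w (D m) = cross2 w ?u2 * cross2 ?u1 (D m) + cross2 ?u1 w * cross2 ?u2 (D m)"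
      by (rule cramer)
    moreover have "cross2 ?u1 ?u2 > 0" using h3 u1 u2 by simp
    moreover have "cross2 w (D m) < 0" unfolding w_def using Lr Lm by (simp add: L_def)
    moreover have "cross2 w ?u2 > 0" using h2 u2 cross2_anti[of B w] unfolding w_def by simp
    moreover have "cross2 ?u1 w > 0" using hA u1 by simp
    moreover have "cross2 ?u1 (D m) \<ge> 0" using u1 le unfolding A_def by simp
    moreover have "cross2 ?u2 (D m) \<ge> 0" using u2 ge unfolding B_def r_def by simp
    ultimately show False
      by (smt (verit, best) mult_nonneg_nonneg mult_pos_neg)
  qed
qed

lemma mono:
  assumes "1 \<le> p" "p < q" "q < n" "cross2 (D (m + p)) (D m) \<le> 0"
  shows "cross2 (D (m + q)) (D m) < 0"
  using assms
proof (induction q)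
  case 0 then show ?case by simp
next
  case (Suc q)
  show ?case
  proof (cases "p = q")
    case True
    then show ?thesis using mono_step[of p m] Suc.prems by simp
  next
    case False
    then have "cross2 (D (m + q)) (D m) < 0" using Suc by simp
    then show ?thesis using mono_step[of q m] Suc.prems by simp
  qed
qed

end



lemma Q_trans_real:
  fixes xs ys xt yt xu yu :: real
  assumes nn: "xs \<ge> 0" "ys \<ge> 0" "xt \<ge> 0" "yt \<ge> 0" "xu \<ge> 0" "yu \<ge> 0"
    and h1: "xs * yt < ys * xt" and h2: "xt * yu < yt * xu"
  shows "xs * yu < ys * xu"
proof -
  have "ys * xt > 0" using h1 nn mult_nonneg_nonneg[of xs yt] by linarith
  hence ysp: "ys > 0" and xtp: "xt > 0" using nn by (auto simp: zero_less_mult_iff)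
  have "yt * xu > 0" using h2 nn mult_nonneg_nonneg[of xt yu] by linarith
  hence ytp: "yt > 0" and xup: "xu > 0" using nn by (auto simp: zero_less_mult_iff)
  have "(xs * yt) * (xt * yu) \<le> (xs * yt) * (yt * xu)"
    using h2 nn by (intro mult_left_mono) auto
  also have "\<dots> < (ys * xt) * (yt * xu)"
    using h1 ytp xup by (intro mult_strict_right_mono) auto
  finally have "(xs * yu) * (xt * yt) < (ys * xu) * (xt * yt)" by (simp add: algebra_simps)
  then show ?thesis using xtp ytp by (simp add: mult_less_cancel_right)
qed

lemma quasi_real:
  fixes a b xs ys xu yu :: real
  assumes ab: "a > 0" "b > 0" "a + b \<ge> 1"
    and nn: "xs \<ge> 0" "ys \<ge> 0" "xu \<ge> 0" "yu \<ge> 0"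
    and ne: "xs * yu < ys * xu"
  shows "(a * xs + b * xu) * (a * ys + b * yu) > min (xs * ys) (xu * yu)"
proof -
  define c where "c = min (xs * ys) (xu * yu)"
  define A where "A = xs * yu"
  define B where "B = ys * xu"
  have c0: "c \<ge> 0" unfolding c_def using nn by simp
  have AB: "A * B \<ge> c * c"
  proof -
    have "A * B = (xs * ys) * (xu * yu)" unfolding A_def B_def by (simp add: algebra_simps)
    moreover have "xs * ys \<ge> c" "xu * yu \<ge> c" unfolding c_def by auto
    ultimately show ?thesis using c0 mult_mono[of c "xs*ys" c "xu*yu"] by simp
  qed
  have A0: "A \<ge> 0" "B \<ge> 0" unfolding A_def B_def using nn by auto
  have "(A + B)^2 = (A - B)^2 + 4 * (A * B)" by (simp add: power2_eq_square algebra_simps)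
  moreover have "(A - B)^2 > 0" using ne unfolding A_def B_def by simp
  ultimately have "(A + B)^2 > (2 * c)^2" using AB by (simp add: power2_eq_square)
  hence sum: "A + B > 2 * c" using A0 c0 power_less_imp_less_base[of "2*c" 2 "A+B"] by simp
  have eq: "(a * xs + b * xu) * (a * ys + b * yu) = a*a * (xs*ys) + b*b*(xu*yu) + a*b*(A+B)"
    unfolding A_def B_def by (simp add: algebra_simps)
  have "a*a*(xs*ys) \<ge> a*a*c" "b*b*(xu*yu) \<ge> b*b*c" unfolding c_def by (auto intro: mult_left_mono)
  moreover have "a*b*(A+B) > a*b*(2*c)" using sum ab by simp
  ultimately have "(a * xs + b * xu) * (a * ys + b * yu) > (a + b)^2 * c"
    unfolding eq by (simp add: power2_eq_square algebra_simps)
  moreover have "(a + b)^2 * c \<ge> c"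
  proof -
    have "(a+b)^2 \<ge> 1" using one_le_power[of "a+b" 2] ab by simp
    then show ?thesis using c0 mult_right_mono[of 1 "(a+b)^2" c] by simp
  qed
  ultimately show ?thesis unfolding c_def by simp
qed

locale arc = poly +
  fixes i j :: nat
  assumes nopar: "no_parallel_edges n v" and ilt: "i < n" and jlt: "j < n"
    and prec: "edge_prec n v i j"
begin

lemma edge_line_eq: "edge_line n v m = {V m + t *\<^sub>R D m | t. True}"
  by (simp add: edge_line_def V_def D_def)

lemma ij: "i \<noteq> j" using prec ilt jlt by (simp add: edge_prec_def)

definition T where "T = (SOME t. t \<ge> 1 \<and> V i + t *\<^sub>R D i \<in> edge_line n v j)"

lemma T_prop: "T \<ge> 1 \<and> V i + T *\<^sub>R D i \<in> edge_line n v j"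
proof -
  have "\<exists>t. t \<ge> 1 \<and> V i + t *\<^sub>R D i \<in> edge_line n v j"
    using prec ilt by (auto simp: edge_prec_def V_def D_def)
  then show ?thesis unfolding T_def by (rule someI_ex)
qed

definition I where "I = V i + T *\<^sub>R D i"

definition T' where "T' = (SOME t. I = V j + t *\<^sub>R D j)"

lemma T'_prop: "I = V j + T' *\<^sub>R D j"
proof -
  have "\<exists>t. I = V j + t *\<^sub>R D j" using T_prop unfolding edge_line_eq I_def by auto
  then show ?thesis unfolding T'_def by (rule someI_ex)
qed

lemma LjI: "L j I = 0" using T'_prop by (simp add: L_def)
lemma LiI: "L i I = 0" by (simp add: L_def I_def)

lemma cij_ne: "cross2 (D i) (D j) \<noteq> 0"
  using nopar ilt jlt ij by (simp add: no_parallel_edges_def D_def)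

lemma cij_neg: "cross2 (D i) (D j) < 0" and LjVi: "L j (V i) > 0"
proof -
  have e: "L j I = L j (V i) + T * cross2 (D i) (D j)" unfolding I_def by (rule L_affine)
  have "L j (V i) \<ge> 0" by (rule Lnonneg)
  moreover have "T \<ge> 1" using T_prop by simp
  ultimately have cn: "cross2 (D i) (D j) < 0"
  proof (cases "cross2 (D i) (D j) < 0")
    case False
    with cij_ne have "cross2 (D i) (D j) > 0" by simp
    with \<open>T \<ge> 1\<close> have "T * cross2 (D i) (D j) > 0" by simp
    with e LjI \<open>L j (V i) \<ge> 0\<close> show ?thesis by simp
  qed
  then show "cross2 (D i) (D j) < 0" .
  have "T * cross2 (D i) (D j) < 0" using cn \<open>T \<ge> 1\<close> by (simp add: mult_pos_neg)
  then show "L j (V i) > 0" using e LjI by simp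
qed

lemma kappa: "cross2 (D j) (D i) > 0"
  using cij_neg cross2_anti[of "D j" "D i"] by simp

lemma i_not_Sucj: "i mod n \<noteq> Suc j mod n"
proof
  assume "i mod n = Suc j mod n"
  then have "V i = V (Suc j)" using V_mod[of i] V_mod[of "Suc j"] by simp
  then have "L j (V i) = 0" using L_step[of j j] by (simp add: L_def)
  then show False using LjVi by simp
qed

lemma T'_nonpos: "T' \<le> 0"
proof -
  have "L i I = L i (V j) + T' * cross2 (D j) (D i)" using T'_prop L_affine by simp
  moreover have "T' > 0 \<Longrightarrow> T' * cross2 (D j) (D i) > 0" using kappa by simp
  ultimately show ?thesis using LiI Lnonneg[of i j] by fastforce
qed

definition bN where "bN = (if Suc j \<le> i then i else i + n)"

lemma bN_facts: "Suc j < bN" "bN < j + n" "V bN = V i" "D bN = D i" "V (Suc bN) = V (Suc i)"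
proof -
  show "Suc j < bN"
    using i_not_Sucj ilt jlt unfolding bN_def
    by (cases "Suc j \<le> i"; cases "Suc j = n") (auto simp: mod_less)
  show "bN < j + n" using ilt jlt ij unfolding bN_def by auto
  show "V bN = V i" "D bN = D i" "V (Suc bN) = V (Suc i)" unfolding bN_def
    using V_add_n[of "Suc i"] by auto
qed

lemma arcL:
  assumes k: "Suc j \<le> k" "k < bN"
  shows "L k I > 0"
proof -
  have e1: "L k I = L k (V i) + T * cross2 (D i) (D k)" unfolding I_def by (rule L_affine)
  have e2: "L k (V (Suc i)) = L k (V i) + cross2 (D i) (D k)" using L_step[of k i] by simp
  show ?thesis
  proof (cases "cross2 (D i) (D k) \<ge> 0")
    case True
    have "V (Suc i) = V (k + (Suc bN - k))" using k bN_facts by simp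
    moreover have "2 \<le> Suc bN - k" "Suc bN - k < n" using k bN_facts by auto
    ultimately have "L k (V (Suc i)) > 0" using Lpos_off[of "Suc bN - k" k] by simp
    moreover have "T \<ge> 1" using T_prop by simp
    moreover have "(T - 1) * cross2 (D i) (D k) \<ge> 0" using True \<open>T \<ge> 1\<close> by simp
    moreover have "L k I = L k (V (Suc i)) + (T - 1) * cross2 (D i) (D k)" using e1 e2 by (simp add: algebra_simps)
    ultimately show ?thesis by linarith
  next
    case False
    have "cross2 (D (k + (bN - k))) (D k) \<le> 0"
      using False k bN_facts cross2_anti[of "D i" "D k"] by simp
    then have "cross2 (D (k + (j + n - k))) (D k) < 0"
      using k bN_facts by (intro mono[of "bN - k"]) auto
    then have cjk: "cross2 (D j) (D k) < 0" using k bN_facts by simp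
    have "V j = V (k + (j + n - k))" using k bN_facts by simp
    moreover have "2 \<le> j + n - k" "j + n - k < n" using k bN_facts by auto
    ultimately have "L k (V j) > 0" using Lpos_off[of "j + n - k" k] by simp
    moreover have "L k I = L k (V j) + T' * cross2 (D j) (D k)" using T'_prop L_affine by simp
    moreover have "T' * cross2 (D j) (D k) \<ge> 0" using cjk T'_nonpos mult_nonpos_nonpos[of T' "cross2 (D j) (D k)"] by simp
    ultimately show ?thesis by linarith
  qed
qed

end


context arc begin

abbreviation p where "p \<equiv> bdry_path n v"

lemma path_edge:
  assumes "real k \<le> t" "t \<le> real k + 1"
  shows "p t = V k + (t - real k) *\<^sub>R D k"
proof (cases "t < real k + 1")
  case True
  then have fl: "\<lfloor>t\<rfloor> = int k" using assms by (simp add: floor_eq_iff)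
  show ?thesis unfolding bdry_path_def Let_def fl by (simp add: V_def D_def)
next
  case False
  then have t: "t = real k + 1" using assms by simp
  have fl: "\<lfloor>t\<rfloor> = int (Suc k)" unfolding t by simp
  show ?thesis unfolding bdry_path_def Let_def fl
    using V_def[of "Suc k"] nat_int[of "Suc k"] by (simp add: t D_eq)
qed

definition x where "x X = cross2 (X - I) (D j)"
definition y where "y X = cross2 (X - I) (D i)"

lemma L_shift: "L m X = cross2 (X - I) (D m) + L m I" by (simp add: L_def)

lemma x_L: "x X = L j X" using L_shift[of j X] LjI by (simp add: x_def)
lemma y_L: "y X = L i X" using L_shift[of i X] LiI by (simp add: y_def)

lemma V_in_P: "V k \<in> polygon n v"
  unfolding polygon_def V_def using npos by (intro hull_inc) auto

lemma convex_P: "convex (polygon n v)" by (simp add: polygon_def convex_convex_hull)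

lemma L_comb: "u + w = 1 \<Longrightarrow> L m (u *\<^sub>R X + w *\<^sub>R Y) = u * L m X + w * L m Y"
proof -
  assume "u + w = 1"
  then have w: "w = 1 - u" by simp
  show ?thesis unfolding L_def w by (simp add: algebra_simps)
qed

lemma L_P: assumes "X \<in> polygon n v" shows "L m X \<ge> 0"
proof -
  have "polygon n v \<subseteq> {X. L m X \<ge> 0}" unfolding polygon_def
  proof (rule hull_minimal)
    show "v ` {..<n} \<subseteq> {X. 0 \<le> L m X}"
    proof
      fix X assume "X \<in> v ` {..<n}"
      then obtain r where r: "r < n" "X = v r" by auto
      then have "X = V r" by (simp add: V_def)
      then show "X \<in> {X. 0 \<le> L m X}" using Lnonneg by simp
    qed
    show "convex {X. 0 \<le> L m X}"
      unfolding convex_def using L_comb by (simp add: add_nonneg_nonneg)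
  qed
  then show ?thesis using assms by auto
qed

lemma path_in_P:
  assumes "real k \<le> t" "t \<le> real k + 1"
  shows "p t \<in> polygon n v"
proof -
  define s where "s = t - real k"
  have s: "0 \<le> s" "s \<le> 1" using assms s_def by auto
  have "p t = (1 - s) *\<^sub>R V k + s *\<^sub>R V (Suc k)"
    using path_edge[OF assms] unfolding s_def by (simp add: D_eq algebra_simps)
  also have "\<dots> \<in> polygon n v"
    using convex_P V_in_P s by (intro convexD) auto
  finally show ?thesis .
qed

lemma arc_edge_exists:
  assumes "real (Suc j) \<le> t" "t \<le> real bN"
  shows "\<exists>k. Suc j \<le> k \<and> k < bN \<and> real k \<le> t \<and> t \<le> real k + 1"
proof (cases "t < real bN")
  case True
  define k where "k = nat \<lfloor>t\<rfloor>"
  have t0: "t \<ge> 0" using assms by simp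
  have fk: "real k = of_int \<lfloor>t\<rfloor>" unfolding k_def using t0 by simp
  have f0: "\<lfloor>t\<rfloor> \<ge> 0" using t0 by simp
  have "int (Suc j) \<le> \<lfloor>t\<rfloor>" using assms(1) by (simp add: le_floor_iff)
  then have "Suc j \<le> k" unfolding k_def using f0 by (simp add: le_nat_iff)
  moreover have "\<lfloor>t\<rfloor> < int bN" using True by (simp add: floor_less_iff)
  then have "k < bN" unfolding k_def using f0 by (simp add: nat_less_iff)
  moreover have "real k \<le> t" "t \<le> real k + 1" using fk by linarith+
  ultimately show ?thesis by blast
next
  case False
  then have t: "t = real bN" using assms by simp
  have "Suc j \<le> bN - 1" "bN - 1 < bN" "real (bN - 1) \<le> t" "t \<le> real (bN - 1) + 1"
    using bN_facts t by auto
  then show ?thesis by blast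
qed

lemma Lk_path: "real k \<le> t \<Longrightarrow> t \<le> real k + 1 \<Longrightarrow> L k (p t) = 0"
  using path_edge L_affine[of k "V k" "t - real k" "D k"] by (simp add: L_def)

lemma xy_P: "X \<in> polygon n v \<Longrightarrow> x X \<ge> 0 \<and> y X \<ge> 0"
  using L_P x_L y_L by simp

lemma xy_path:
  assumes "real (Suc j) \<le> t" "t \<le> real bN"
  shows "p t \<in> polygon n v" "x (p t) \<ge> 0" "y (p t) \<ge> 0"
  using arc_edge_exists[OF assms] path_in_P xy_P by blast+

definition Q where "Q s u = x (p s) * y (p u) - y (p s) * x (p u)"

lemma Q_cross: "Q s u = cross2 (p s - I) (p u - I) * cross2 (D j) (D i)"
  unfolding Q_def x_def y_def by (rule cross2_quad)

lemma Q_edge: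
  assumes k: "Suc j \<le> k" "k < bN" and su: "real k \<le> s" "s < u" "u \<le> real k + 1"
  shows "Q s u < 0"
proof -
  have pu: "p u = V k + (u - real k) *\<^sub>R D k" using path_edge[of k u] su by simp
  have ps: "p s = V k + (s - real k) *\<^sub>R D k" using path_edge[of k s] su by simp
  have "p u - I = (p s - I) + (u - s) *\<^sub>R D k"
    by (simp only: pu ps) (simp add: algebra_simps)
  then have "cross2 (p s - I) (p u - I) = cross2 (p s - I) (p s - I) + (u - s) * cross2 (p s - I) (D k)"
    by (simp only: cross2_add2 cross2_scale2)
  then have "cross2 (p s - I) (p u - I) = (u - s) * cross2 (p s - I) (D k)"
    by (simp only: cross2_self add_0_left)
  also have "cross2 (p s - I) (D k) = - L k I"
    using L_shift[of k "p s"] Lk_path[of k s] su by simp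
  finally have "cross2 (p s - I) (p u - I) < 0"
    using arcL[OF k] su by (simp add: mult_pos_neg)
  then show ?thesis unfolding Q_cross using kappa by (simp add: mult_neg_pos)
qed

end



lemma nat_sign_change:
  fixes h :: "nat \<Rightarrow> real"
  shows "h a < 0 \<Longrightarrow> a \<le> b \<Longrightarrow> 0 \<le> h b \<Longrightarrow> \<exists>k. a \<le> k \<and> k < b \<and> h k < 0 \<and> 0 \<le> h (Suc k)"
proof (induction b)
  case 0 then show ?case by simp
next
  case (Suc b)
  show ?case
  proof (cases "h b < 0")
    case True
    then show ?thesis using Suc.prems by (intro exI[of _ b]) (auto simp: le_Suc_eq)
  next
    case False
    then have "a \<le> b" using Suc.prems by (auto simp: le_Suc_eq)
    then show ?thesis using Suc.IH Suc.prems False by force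
  qed
qed

lemma scale_eq: "(a::real) * b = c * d + e * f \<Longrightarrow> (a * k) * b = (c * k) * d + (e * k) * f"
proof -
  assume h: "a * b = c * d + e * f"
  have "(a * k) * b = k * (a * b)" by simp
  also have "\<dots> = k * (c * d + e * f)" using h by simp
  also have "\<dots> = (c * k) * d + (e * k) * f" by (simp add: algebra_simps)
  finally show ?thesis .
qed

context arc begin

lemma floor_facts: "s \<ge> 0 \<Longrightarrow> real (nat \<lfloor>s\<rfloor>) \<le> s \<and> s < real (nat \<lfloor>s\<rfloor>) + 1"
  using floor_correct[of s] by simp

lemma Q_mono_aux:
  "real (Suc j) \<le> s \<Longrightarrow> s < u \<Longrightarrow> u \<le> real bN \<Longrightarrow> u \<le> real (nat \<lfloor>s\<rfloor>) + 1 + real N \<Longrightarrow> Q s u < 0"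
proof (induction N arbitrary: u)
  case 0
  define k where "k = nat \<lfloor>s\<rfloor>"
  have s0: "s \<ge> 0" using 0 by simp
  have fk: "real k \<le> s" "s < real k + 1" using floor_facts[OF s0] unfolding k_def by auto
  have f0: "\<lfloor>s\<rfloor> \<ge> 0" using s0 by simp
  have "int (Suc j) \<le> \<lfloor>s\<rfloor>" using 0 by (simp add: le_floor_iff)
  then have k1: "Suc j \<le> k" unfolding k_def using f0 by (simp add: le_nat_iff)
  have "real k < real bN" using fk 0 by linarith
  then have k2: "k < bN" by simp
  show ?case using Q_edge[OF k1 k2 fk(1)] 0 unfolding k_def by simp
next
  case (Suc N)
  show ?case
  proof (cases "u \<le> real (nat \<lfloor>s\<rfloor>) + 1 + real N")
    case True then show ?thesis using Suc by simp
  next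
    case False
    have s0: "s \<ge> 0" using Suc.prems by simp
    define k' where "k' = nat \<lfloor>s\<rfloor> + 1 + N"
    define r where "r = real k'"
    have r_eq: "r = real (nat \<lfloor>s\<rfloor>) + 1 + real N" unfolding r_def k'_def by simp
    have sr: "s < r" using floor_facts[OF s0] r_eq by linarith
    have ru: "r < u" using False r_eq by linarith
    have "real k' < real bN" using ru Suc.prems unfolding r_def by linarith
    then have k2: "k' < bN" by simp
    have "real (Suc j) < real k'" using sr Suc.prems unfolding r_def by linarith
    then have k1: "Suc j \<le> k'" by simp
    have Qsr: "Q s r < 0" using Suc.IH[of r] Suc.prems sr ru r_eq by simp
    have Qru: "Q r u < 0" using Q_edge[OF k1 k2, of r u] ru Suc.prems r_eq unfolding r_def by simp
    have pr: "real (Suc j) \<le> r" "r \<le> real bN" using sr ru Suc.prems by linarith+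
    show ?thesis
      using Q_trans_real[of "x (p s)" "y (p s)" "x (p r)" "y (p r)" "x (p u)" "y (p u)"]
        Qsr Qru xy_path[of s] xy_path[of r] xy_path[of u] pr Suc.prems sr ru
      unfolding Q_def by auto
  qed
qed

lemma Q_mono: assumes "real (Suc j) \<le> s" "s < u" "u \<le> real bN" shows "Q s u < 0"
proof -
  have "u \<le> real (nat \<lfloor>s\<rfloor>) + 1 + real bN" using assms(3) of_nat_0_le_iff[of "nat \<lfloor>s\<rfloor>"] by linarith
  then show ?thesis using Q_mono_aux[of s u bN] assms by blast
qed

definition G where "G t = x (p t) * y (p t)"

lemma quasi:
  assumes st: "real (Suc j) \<le> s" "s < t" "t < u" "u \<le> real bN"
  shows "G t > min (G s) (G u)"
proof -
  have Qsu: "Q s u < 0" and Qtu: "Q t u < 0" and Qst: "Q s t < 0" using Q_mono st by auto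
  define \<alpha> where "\<alpha> = Q t u / Q s u"
  define \<beta> where "\<beta> = Q s t / Q s u"
  have ab: "\<alpha> > 0" "\<beta> > 0" unfolding \<alpha>_def \<beta>_def using Qsu Qtu Qst by (auto simp: divide_neg_neg)
  have idx: "Q s u * x (p t) = Q t u * x (p s) + Q s t * x (p u)" unfolding Q_def by (simp add: algebra_simps)
  have idy: "Q s u * y (p t) = Q t u * y (p s) + Q s t * y (p u)" unfolding Q_def by (simp add: algebra_simps)
  have hx: "x (p t) = \<alpha> * x (p s) + \<beta> * x (p u)"
    using idx Qsu unfolding \<alpha>_def \<beta>_def by (simp add: field_simps)
  have hy: "y (p t) = \<alpha> * y (p s) + \<beta> * y (p u)"
    using idy Qsu unfolding \<alpha>_def \<beta>_def by (simp add: field_simps)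
  have pt: "real (Suc j) \<le> t" "t \<le> real bN" using st by linarith+
  obtain k where k: "Suc j \<le> k" "k < bN" "real k \<le> t" "t \<le> real k + 1"
    using arc_edge_exists[OF pt] by blast
  define lam where "lam = L k I"
  have lam: "lam > 0" unfolding lam_def using arcL k by simp
  have Ls: "L k (p s) \<ge> 0" using L_P xy_path[of s] st by auto
  have Lu: "L k (p u) \<ge> 0" using L_P xy_path[of u] st by auto
  have lt: "cross2 (p t - I) (D k) = - lam" using L_shift[of k "p t"] Lk_path[OF k(3,4)] unfolding lam_def by simp
  have ls: "cross2 (p s - I) (D k) = L k (p s) - lam" using L_shift[of k "p s"] unfolding lam_def by simp
  have lu: "cross2 (p u - I) (D k) = L k (p u) - lam" using L_shift[of k "p u"] unfolding lam_def by simp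
  have "cross2 (p s - I) (p u - I) * cross2 (p t - I) (D k)
      = cross2 (p t - I) (p u - I) * cross2 (p s - I) (D k) + cross2 (p s - I) (p t - I) * cross2 (p u - I) (D k)"
    by (rule cramer)
  then have "Q s u * cross2 (p t - I) (D k)
      = Q t u * cross2 (p s - I) (D k) + Q s t * cross2 (p u - I) (D k)"
    unfolding Q_cross by (rule scale_eq)
  then have "Q s u * (- lam) = Q t u * (L k (p s) - lam) + Q s t * (L k (p u) - lam)"
    unfolding lt ls lu .
  then have H: "Q t u * (L k (p s) - lam) + Q s t * (L k (p u) - lam) = Q s u * (- lam)" by simp
  have "\<alpha> * (L k (p s) - lam) + \<beta> * (L k (p u) - lam) = (Q t u * (L k (p s) - lam) + Q s t * (L k (p u) - lam)) / Q s u"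
    unfolding \<alpha>_def \<beta>_def by (simp add: add_divide_distrib)
  also have "\<dots> = - lam" unfolding H using Qsu by simp
  finally have "- lam = \<alpha> * (L k (p s) - lam) + \<beta> * (L k (p u) - lam)" by simp
  then have "(\<alpha> + \<beta> - 1) * lam = \<alpha> * L k (p s) + \<beta> * L k (p u)" by (simp add: algebra_simps)
  moreover have "\<alpha> * L k (p s) + \<beta> * L k (p u) \<ge> 0" using ab Ls Lu by simp
  ultimately have "(\<alpha> + \<beta> - 1) * lam \<ge> 0" by simp
  then have abs1: "\<alpha> + \<beta> \<ge> 1" using lam by (simp add: zero_le_mult_iff)
  have nn: "x (p s) \<ge> 0" "y (p s) \<ge> 0" "x (p u) \<ge> 0" "y (p u) \<ge> 0"
    using xy_path[of s] xy_path[of u] st by auto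
  have ne: "x (p s) * y (p u) < y (p s) * x (p u)" using Qsu unfolding Q_def by simp
  show ?thesis unfolding G_def hx hy
    using quasi_real[OF ab abs1 nn ne] by simp
qed

end



context arc begin

lemma Di_ne: "D i \<noteq> 0" using cij_ne by auto
lemma Dj_ne: "D j \<noteq> 0" using cij_ne by auto

definition NN where "NN = norm (D i) * norm (D j)"
lemma NN_pos: "NN > 0" unfolding NN_def using Di_ne Dj_ne by simp

lemma disprod_eq:
  assumes "X \<in> polygon n v"
  shows "disprod n v i j X = x X * y X / NN"
proof -
  have "infdist X (edge_line n v i) = \<bar>L i X\<bar> / norm (D i)"
    unfolding edge_line_eq L_def by (rule infdist_line[OF Di_ne])
  moreover have "infdist X (edge_line n v j) = \<bar>L j X\<bar> / norm (D j)"
    unfolding edge_line_eq L_def by (rule infdist_line[OF Dj_ne])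
  moreover have "L i X \<ge> 0" "L j X \<ge> 0" using L_P assms by auto
  ultimately show ?thesis unfolding disprod_def NN_def x_L y_L by simp
qed

lemma g_affine:
  assumes "real k \<le> t" "t \<le> real k + 1"
  shows "x (p t) = x (p (real k)) + (t - real k) * (x (p (real k + 1)) - x (p (real k)))"
    and "y (p t) = y (p (real k)) + (t - real k) * (y (p (real k + 1)) - y (p (real k)))"
proof -
  have e0: "p (real k) = V k" using path_edge[of k "real k"] by simp
  have e1: "p (real k + 1) = V k + D k" using path_edge[of k "real k + 1"] by simp
  have et: "p t = V k + (t - real k) *\<^sub>R D k" using path_edge assms by simp
  show "x (p t) = x (p (real k)) + (t - real k) * (x (p (real k + 1)) - x (p (real k)))"
    unfolding e0 e1 et x_def by (simp add: algebra_simps)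
  show "y (p t) = y (p (real k)) + (t - real k) * (y (p (real k + 1)) - y (p (real k)))"
    unfolding e0 e1 et y_def by (simp add: algebra_simps)
qed

lemma main:
  assumes Z: "Z \<in> polygon n v" and mx: "\<forall>Y\<in>polygon n v. disprod n v i j Y \<le> disprod n v i j Z"
  shows "\<exists>z\<in>{real (Suc j)..real bN}. p z = Z \<and>
      (\<forall>s t. real (Suc j) \<le> s \<and> s < t \<and> t \<le> z \<longrightarrow>
          disprod n v i j (p s) < disprod n v i j (p t)) \<and>
      (\<forall>s t. z \<le> s \<and> s < t \<and> t \<le> real bN \<longrightarrow>
          disprod n v i j (p t) < disprod n v i j (p s))"
proof -
  define a where "a = real (Suc j)"
  define b where "b = real bN"
  have ab: "a + 1 \<le> b" unfolding a_def b_def using bN_facts by simp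
  define GZ where "GZ = x Z * y Z"
  have GY: "x Y * y Y \<le> GZ" if "Y \<in> polygon n v" for Y
  proof -
    have "x Y * y Y / NN \<le> x Z * y Z / NN" using mx that Z disprod_eq by auto
    then show ?thesis unfolding GZ_def using NN_pos by (simp add: divide_le_cancel)
  qed
  have Gle: "G t \<le> GZ" if "a \<le> t" "t \<le> b" for t
    unfolding G_def using GY xy_path that unfolding a_def b_def by auto
  have pa: "p a = V (Suc j)" unfolding a_def using path_edge[of "Suc j" "real (Suc j)"] by simp
  have pb: "p b = V i"
  proof -
    have "p b = V (bN - 1) + D (bN - 1)" unfolding b_def
      using path_edge[of "bN - 1" "real bN"] bN_facts by (simp add: of_nat_diff)
    also have "\<dots> = V bN" using D_eq[of "bN - 1"] bN_facts by simp
    finally show ?thesis using bN_facts by simp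
  qed
  have xa: "x (p a) = 0" unfolding pa x_L using L_step[of j j] by (simp add: L_def)
  have yb: "y (p b) = 0" unfolding pb y_L by (simp add: L_def)
  have Qab: "Q a b < 0" using Q_mono[of a b] ab unfolding a_def b_def by simp
  have nna: "y (p a) \<ge> 0" and nnb: "x (p b) \<ge> 0" using xy_path[of a] xy_path[of b] ab unfolding a_def b_def by auto
  have ya: "y (p a) > 0" and xb: "x (p b) > 0"
    using Qab xa yb nna nnb unfolding Q_def by (auto simp: zero_less_mult_iff)
  define tm where "tm = a + 1/2"
  have tm: "a < tm" "tm < b" unfolding tm_def using ab by auto
  have "Q a tm < 0" "Q tm b < 0" using Q_mono tm ab unfolding a_def b_def by auto
  moreover have "x (p tm) \<ge> 0" "y (p tm) \<ge> 0" using xy_path[of tm] tm unfolding a_def b_def by auto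
  ultimately have "x (p tm) > 0" "y (p tm) > 0"
    using xa yb nna nnb unfolding Q_def by (auto simp: zero_less_mult_iff)
  then have "G tm > 0" unfolding G_def by simp
  then have GZpos: "GZ > 0" using Gle[of tm] tm by simp
  have xZ: "x Z > 0" and yZ: "y Z > 0"
    using GZpos xy_P[OF Z] unfolding GZ_def by (auto simp: zero_less_mult_iff)
  define g where "g t = x (p t) * y Z - y (p t) * x Z" for t
  have g0: "g (real (Suc j)) < 0" unfolding g_def using xa ya xZ a_def by simp
  have g1: "g (real bN) \<ge> 0" unfolding g_def using yb xb yZ b_def by simp
  obtain k where k: "Suc j \<le> k" "k < bN" "g (real k) < 0" "0 \<le> g (real (Suc k))"
    using nat_sign_change[of "\<lambda>m. g (real m)" "Suc j" bN] g0 g1 bN_facts by auto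
  have gaff: "g t = g (real k) + (t - real k) * (g (real k + 1) - g (real k))"
    if "real k \<le> t" "t \<le> real k + 1" for t
  proof -
    note e = g_affine[OF that]
    show ?thesis unfolding g_def by (simp only: e) (simp add: algebra_simps)
  qed
  define \<sigma> where "\<sigma> = - g (real k) / (g (real k + 1) - g (real k))"
  have dpos: "g (real k + 1) - g (real k) > 0" using k by (simp add: add.commute)
  have g1k: "0 \<le> g (real k + 1)" using k by (simp add: add.commute)
  have "g (real k) / (g (real k + 1) - g (real k)) \<le> 0"
    by (rule divide_nonpos_pos) (use dpos k in auto)
  then have \<sigma>0: "0 \<le> \<sigma>" unfolding \<sigma>_def by simp
  have "- g (real k) \<le> g (real k + 1) - g (real k)" using g1k by simp
  then have \<sigma>1: "\<sigma> \<le> 1" unfolding \<sigma>_def using divide_le_eq_1_pos[OF dpos, of "- g (real k)"] by simp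
  note \<sigma> = \<sigma>0 \<sigma>1
  define z where "z = real k + \<sigma>"
  have zk: "real k \<le> z" "z \<le> real k + 1" unfolding z_def using \<sigma> by auto
  have gz: "g z = 0" using gaff[OF zk] dpos unfolding z_def \<sigma>_def by simp
  have zab: "a \<le> z" "z \<le> b" using zk k unfolding a_def b_def by auto
  have pzP: "p z \<in> polygon n v" using path_in_P[OF zk] .
  have nnz: "x (p z) \<ge> 0" "y (p z) \<ge> 0" using xy_P[OF pzP] by auto
  have cr: "x (p z) * y Z = y (p z) * x Z" using gz unfolding g_def by simp
  have lamk: "L k I > 0" using arcL k by simp
  have xz: "x (p z) > 0"
  proof (rule ccontr)
    assume "\<not> ?thesis"
    then have x0: "x (p z) = 0" using nnz by simp
    then have y0: "y (p z) = 0" using cr xZ by simp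
    have "p z - I = 0" using cross2_zero_vec[of "p z - I" "D j" "D i"] x0 y0 kappa
      unfolding x_def y_def by simp
    then have "p z = I" by simp
    then show False using Lk_path[OF zk] lamk by simp
  qed
  define \<mu> where "\<mu> = x Z / x (p z)"
  have mupos: "\<mu> > 0" unfolding \<mu>_def using xZ xz by simp
  have xZe: "x Z = \<mu> * x (p z)" unfolding \<mu>_def using xz by simp
  have yZe: "y Z = \<mu> * y (p z)" unfolding \<mu>_def using xz cr by (simp add: field_simps)
  have vec: "Z - I = \<mu> *\<^sub>R (p z - I)"
  proof -
    have "(Z - I) - \<mu> *\<^sub>R (p z - I) = 0"
      using cross2_zero_vec[of "(Z - I) - \<mu> *\<^sub>R (p z - I)" "D j" "D i"] kappa xZe yZe
      unfolding x_def y_def by simp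
    then show ?thesis by simp
  qed
  have "L k Z = cross2 (Z - I) (D k) + L k I" by (rule L_shift)
  also have "cross2 (Z - I) (D k) = \<mu> * (L k (p z) - L k I)"
    unfolding vec using L_shift[of k "p z"] by simp
  finally have "L k Z = (1 - \<mu>) * L k I" using Lk_path[OF zk] by (simp add: algebra_simps)
  with L_P[OF Z, of k] lamk have mu1: "\<mu> \<le> 1" by (simp add: zero_le_mult_iff)
  have yz: "y (p z) > 0" using yZe yZ mupos by (simp add: zero_less_mult_iff)
  have "x (p z) * y (p z) \<le> GZ" using GY[OF pzP] .
  also have "GZ = \<mu>^2 * (x (p z) * y (p z))" unfolding GZ_def xZe yZe by (simp add: power2_eq_square)
  finally have "1 * (x (p z) * y (p z)) \<le> \<mu>^2 * (x (p z) * y (p z))" by simp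
  then have "1 \<le> \<mu>^2" using xz yz by (simp add: mult_le_cancel_right)
  then have "1 \<le> \<mu>" using power2_le_imp_le[of 1 "\<mu>"] mupos by simp
  with mu1 have "\<mu> = 1" by simp
  then have pz: "p z = Z" using vec by simp
  have GzZ: "G z = GZ" unfolding G_def pz GZ_def ..
  have up: "G s < G t" if st: "a \<le> s" "s < t" "t \<le> z" for s t
  proof (cases "t < z")
    case True
    have "G t > min (G s) (G z)" using quasi[of s t z] st True zab unfolding a_def b_def by simp
    moreover have "G s \<le> G z" using Gle[of s] GzZ st zab by simp
    ultimately show ?thesis by simp
  next
    case False
    then have tz: "t = z" using st by simp
    show ?thesis
    proof (rule ccontr)
      assume "\<not> ?thesis"
      then have "G s \<ge> G z" using tz by simp
      moreover have "G s \<le> G z" using Gle[of s] GzZ st zab by simp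
      ultimately have eq: "G s = G z" by simp
      define m where "m = (s + z) / 2"
      have "G m > min (G s) (G z)" using quasi[of s m z] st tz zab unfolding m_def a_def b_def by simp
      moreover have "G m \<le> G z" using Gle[of m] GzZ st tz zab unfolding m_def by simp
      ultimately show False using eq by simp
    qed
  qed
  have down: "G t < G s" if st: "z \<le> s" "s < t" "t \<le> b" for s t
  proof (cases "z < s")
    case True
    have "G s > min (G z) (G t)" using quasi[of z s t] st True zab unfolding a_def b_def by simp
    moreover have "G s \<le> G z" using Gle[of s] GzZ st zab by simp
    ultimately show ?thesis by linarith
  next
    case False
    then have sz: "s = z" using st by simp
    show ?thesis
    proof (rule ccontr)
      assume "\<not> ?thesis"
      then have "G t \<ge> G z" using sz by simp
      moreover have "G t \<le> G z" using Gle[of t] GzZ st zab by simp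
      ultimately have eq: "G t = G z" by simp
      define m where "m = (z + t) / 2"
      have "G m > min (G z) (G t)" using quasi[of z m t] st sz zab unfolding m_def a_def b_def by simp
      moreover have "G m \<le> G z" using Gle[of m] GzZ st sz zab unfolding m_def by simp
      ultimately show False using eq by simp
    qed
  qed
  have dG: "disprod n v i j (p t) = G t / NN" if "a \<le> t" "t \<le> b" for t
    unfolding G_def using disprod_eq xy_path that unfolding a_def b_def by auto
  show ?thesis
  proof (intro bexI conjI allI impI)
    show "p z = Z" by (rule pz)
    show "z \<in> {real (Suc j)..real bN}" using zab unfolding a_def b_def by simp
  next
    fix s t assume h: "real (Suc j) \<le> s \<and> s < t \<and> t \<le> z"
    then have "G s < G t" using up unfolding a_def by blast
    then show "disprod n v i j (p s) < disprod n v i j (p t)"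
      using dG[of s] dG[of t] h zab NN_pos unfolding a_def by (simp add: divide_strict_right_mono)
  next
    fix s t assume h: "z \<le> s \<and> s < t \<and> t \<le> real bN"
    then have "G t < G s" using down unfolding b_def by blast
    then show "disprod n v i j (p t) < disprod n v i j (p s)"
      using dG[of s] dG[of t] h zab NN_pos unfolding b_def by (simp add: divide_strict_right_mono)
  qed
qed

end

theorem lemma5:
  fixes n :: nat and v :: "nat \<Rightarrow> real^2" and i j :: nat and Z :: "real^2"
  assumes "cw_convex_polygon n v"
    and "no_parallel_edges n v"
    and "i < n" and "j < n"
    and "edge_prec n v i j"
    and "Z \<in> polygon n v"
    and "\<forall>Y\<in>polygon n v. disprod n v i j Y \<le> disprod n v i j Z"
  shows "let a = real (j + 1); b = (if j + 1 \<le> i then real i else real (i + n)) in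
    \<exists>z\<in>{a..b}. bdry_path n v z = Z \<and>
      (\<forall>s t. a \<le> s \<and> s < t \<and> t \<le> z \<longrightarrow>
          disprod n v i j (bdry_path n v s) < disprod n v i j (bdry_path n v t)) \<and>
      (\<forall>s t. z \<le> s \<and> s < t \<and> t \<le> b \<longrightarrow>
          disprod n v i j (bdry_path n v t) < disprod n v i j (bdry_path n v s))"
proof -
  interpret arc n v i j
    using assms by unfold_locales auto
  have b: "(if j + 1 \<le> i then real i else real (i + n)) = real bN" unfolding bN_def by simp
  show ?thesis unfolding Let_def b using main[OF assms(6,7)] by simp
qed



end
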